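(* Let $\beta>2\alpha>0$ with $\beta+2\alpha>1$, assume $s_N=o\big(\sqrt N/\log N\big)$ and let $0<r<m^*$. Then there exists $\rho>0$ (depending on $r$ but not on $N$) such that $$\inf_{x\in\Delta_N^r}\varphi_N\Big(\sqrt{\tfrac{s_N}{N}}x\Big)\ge\varphi_N(\overrightarrow{m}^* )+\rho.$$
   Context: $A=\beta I+\alpha(P+P^T)$ is the $s_N\times s_N$ symmetric circulant matrix ($P$ the cyclic shift), $e_k$ the standard basis of $\mathbb{R}^{s_N}$, $\varphi_N(x)=\frac12x^TAx-\sum_{k=1}^{s_N}\log\cosh(x^TAe_k)$. $m^*$ is the largest solution of $x=\tanh((\beta+2\alpha)x)$ and $\overrightarrow{m}^*=(m^*,\dots,m^* )\in\mathbb{R}^{s_N}$. Let $\lambda_{\min},\lambda_{\max}$ be the smallest and largest eigenvalues of $A$, fix $R>2\lambda_{\max}/\lambda_{\min}$, let $B_{R\sqrt N}$ be the centered Euclidean ball of radius $R\sqrt N$ in $\mathbb{R}^{s_N}$, and $$\Delta_N^r=B_{R\sqrt N}\setminus\Big(\Big[\sqrt{\tfrac{N}{s_N}}(m^*-r),\sqrt{\tfrac{N}{s_N}}(m^*+r)\Big]^{s_N}\cup\Big[\sqrt{\tfrac{N}{s_N}}(-m^*-r),\sqrt{\tfrac{N}{s_N}}(-m^*+r)\Big]^{s_N}\Big).$$ *)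

theory Defs
  imports "HOL-Analysis.Analysis" "HOL-Library.Landau_Symbols"
begin

text \<open>Vectors in R^s are functions nat => real, only indices k < s matter.
  Entries (0-based) of A = beta I + alpha (P + P^T), P the cyclic shift P e_j = e_{(j+1) mod s}.\<close>

definition shiftP :: "nat \<Rightarrow> nat \<Rightarrow> nat \<Rightarrow> real" where
  "shiftP s i j = (if i = (j + 1) mod s then 1 else 0)"

definition circA :: "real \<Rightarrow> real \<Rightarrow> nat \<Rightarrow> nat \<Rightarrow> nat \<Rightarrow> real" where
  "circA \<alpha> \<beta> s i j = \<beta> * (if i = j then 1 else 0) + \<alpha> * (shiftP s i j + shiftP s j i)"

definition quadA :: "real \<Rightarrow> real \<Rightarrow> nat \<Rightarrow> (nat \<Rightarrow> real) \<Rightarrow> real" where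
  "quadA \<alpha> \<beta> s x = (\<Sum>i<s. \<Sum>j<s. x i * circA \<alpha> \<beta> s i j * x j)"

definition xAe :: "real \<Rightarrow> real \<Rightarrow> nat \<Rightarrow> (nat \<Rightarrow> real) \<Rightarrow> nat \<Rightarrow> real" where
  "xAe \<alpha> \<beta> s x k = (\<Sum>i<s. x i * circA \<alpha> \<beta> s i k)"

definition phiN :: "real \<Rightarrow> real \<Rightarrow> nat \<Rightarrow> (nat \<Rightarrow> real) \<Rightarrow> real" where
  "phiN \<alpha> \<beta> s x = quadA \<alpha> \<beta> s x / 2 - (\<Sum>k<s. ln (cosh (xAe \<alpha> \<beta> s x k)))"

text \<open>Eigenvalues of the s x s matrix A (real symmetric, so all real).\<close>
definition eigvalsA :: "real \<Rightarrow> real \<Rightarrow> nat \<Rightarrow> real set" where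
  "eigvalsA \<alpha> \<beta> s = {\<mu>. \<exists>x::nat \<Rightarrow> real. (\<exists>i<s. x i \<noteq> 0) \<and>
      (\<forall>i<s. (\<Sum>j<s. circA \<alpha> \<beta> s i j * x j) = \<mu> * x i)}"

definition lam_min :: "real \<Rightarrow> real \<Rightarrow> nat \<Rightarrow> real" where
  "lam_min \<alpha> \<beta> s = Min (eigvalsA \<alpha> \<beta> s)"

definition lam_max :: "real \<Rightarrow> real \<Rightarrow> nat \<Rightarrow> real" where
  "lam_max \<alpha> \<beta> s = Max (eigvalsA \<alpha> \<beta> s)"

definition m_star :: "real \<Rightarrow> real \<Rightarrow> real" where
  "m_star \<alpha> \<beta> = (GREATEST x::real. x = tanh ((\<beta> + 2 * \<alpha>) * x))"

definition DeltaN :: "real \<Rightarrow> real \<Rightarrow> real \<Rightarrow> nat \<Rightarrow> nat \<Rightarrow> real \<Rightarrow> (nat \<Rightarrow> real) set" where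
  "DeltaN \<alpha> \<beta> R N s r =
     (let c = sqrt (real N / real s); m = m_star \<alpha> \<beta> in
      {x. (\<forall>k\<ge>s. x k = 0) \<and> (\<Sum>k<s. (x k)\<^sup>2) \<le> (R * sqrt (real N))\<^sup>2 \<and>
          \<not> (\<forall>k<s. c * (m - r) \<le> x k \<and> x k \<le> c * (m + r)) \<and>
          \<not> (\<forall>k<s. c * (- m - r) \<le> x k \<and> x k \<le> c * (- m + r))})"

end

theory Submission
  imports Defs
begin


definition hf :: "real \<Rightarrow> real \<Rightarrow> real" where
  "hf c t = t\<^sup>2 / (2*c) - ln (cosh t)"

definition qf :: "real \<Rightarrow> real \<Rightarrow> real" where
  "qf c t = tanh t - t / c"

lemma hf_der: "c > 0 \<Longrightarrow> DERIV (hf c) t :> t / c - tanh t"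
  unfolding hf_def
  apply (rule derivative_eq_intros refl | simp)+
  apply (auto intro!: derivative_eq_intros simp: tanh_def)
  done

lemma qf_der: "c > 0 \<Longrightarrow> DERIV (qf c) t :> (1 - tanh t ^ 2) - 1 / c"
  unfolding qf_def
  by (auto intro!: derivative_eq_intros)

lemma hf_even: "hf c (-t) = hf c t"
  by (simp add: hf_def)

lemma hf_0: "hf c 0 = 0" by (simp add: hf_def)


lemma hf_cont: "c > 0 \<Longrightarrow> continuous_on S (hf c)"
  using hf_der by (meson DERIV_isCont continuous_at_imp_continuous_on)

lemma qf_uniq_lt:
  assumes c: "c > 1" and ab: "0 < a" "a < b" and qa: "qf c a = 0" and qb: "qf c b = 0"
  shows False
proof -
  have c0: "c > 0" using c by simp
  obtain z1 where z1: "0 < z1" "z1 < a" "qf c a - qf c 0 = (a - 0) * ((1 - tanh z1 ^ 2) - 1 / c)"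
    using MVT2[of 0 a "qf c" "\<lambda>t. (1 - tanh t ^ 2) - 1 / c"] qf_der[OF c0] ab by blast
  obtain z2 where z2: "a < z2" "z2 < b" "qf c b - qf c a = (b - a) * ((1 - tanh z2 ^ 2) - 1 / c)"
    using MVT2[of a b "qf c" "\<lambda>t. (1 - tanh t ^ 2) - 1 / c"] qf_der[OF c0] ab by blast
  have "qf c 0 = 0" by (simp add: qf_def)
  then have e1: "(1 - tanh z1 ^ 2) - 1 / c = 0" using z1 qa ab by simp
  have e2: "(1 - tanh z2 ^ 2) - 1 / c = 0" using z2 qa qb ab by simp
  have "tanh z1 ^ 2 = tanh z2 ^ 2" using e1 e2 by simp
  moreover have "tanh z1 > 0" "tanh z2 > 0" using z1 z2 ab by auto
  ultimately have "tanh z1 = tanh z2" by (simp add: power2_eq_iff)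
  then show False using z1 z2 by simp
qed

lemma qf_uniq:
  assumes "c > 1" "0 < a" "0 < b" "qf c a = 0" "qf c b = 0"
  shows "a = b"
  using qf_uniq_lt[of c a b] qf_uniq_lt[of c b a] assms by (metis linorder_neqE_linordered_idom)

lemma hf_lower: "c > 0 \<Longrightarrow> hf c t \<ge> t\<^sup>2 / (2*c) - \<bar>t\<bar>"
proof -
  assume c: "c > 0"
  have "cosh t \<le> exp \<bar>t\<bar>"
    by (simp add: cosh_def) (smt (verit) exp_ge_zero exp_le_cancel_iff)
  then have "ln (cosh t) \<le> \<bar>t\<bar>"
    by (metis cosh_real_pos ln_exp ln_le_cancel_iff exp_gt_zero)
  then show ?thesis by (simp add: hf_def)
qed


lemma hf_exists:
  assumes c: "c > 1"
  shows "\<exists>t0>0. qf c t0 = 0 \<and> (\<forall>t. hf c t0 \<le> hf c t) \<and> hf c t0 < 0"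
proof -
  have c0: "c > 0" using c by simp
  have "DERIV (qf c) 0 :> 1 - 1 / c" using qf_der[OF c0, of 0] by simp
  moreover have "1 - 1 / c > 0" using c by simp
  ultimately obtain d where d: "d > 0" "\<And>h. h > 0 \<Longrightarrow> h < d \<Longrightarrow> qf c 0 < qf c (0 + h)"
    using DERIV_pos_inc_right by blast
  define t1 where "t1 = min (d/2) 1"
  have t1: "0 < t1" "t1 < d" "t1 \<le> 1" using d by (auto simp: t1_def)
  obtain z where z: "0 < z" "z < t1" "hf c t1 - hf c 0 = (t1 - 0) * (z / c - tanh z)"
    using MVT2[of 0 t1 "hf c" "\<lambda>t. t / c - tanh t"] hf_der[OF c0] t1 by blast
  have "qf c z > 0" using d(2)[of z] z t1 by (simp add: qf_def)
  then have "z / c - tanh z < 0" by (simp add: qf_def)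
  then have ht1: "hf c t1 < 0" using z t1 hf_0[of c] by (simp add: mult_pos_neg)
  define M where "M = 2 * c + 1"
  have big: "hf c t > 0" if "t \<ge> M" for t
  proof -
    have "t / (2*c) > 1" using that c by (simp add: M_def field_simps)
    then have "t * (t / (2*c)) > t * 1" using that c by (intro mult_strict_left_mono) (auto simp: M_def)
    then have "t\<^sup>2 / (2*c) - \<bar>t\<bar> > 0" using that c by (simp add: M_def power2_eq_square)
    then show ?thesis using hf_lower[OF c0, of t] by linarith
  qed
  obtain t0 where t0: "t0 \<in> {0..M}" "\<And>t. t \<in> {0..M} \<Longrightarrow> hf c t0 \<le> hf c t"
    using continuous_attains_inf[of "{0..M}" "hf c"] hf_cont[OF c0] c by (auto simp: M_def)
  have "t1 \<in> {0..M}" using t1 c by (auto simp: M_def)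
  then have h0neg: "hf c t0 < 0" using t0(2)[of t1] ht1 by simp
  have glob: "hf c t0 \<le> hf c t" for t
  proof (cases "t \<ge> 0")
    case True
    then show ?thesis using t0(2)[of t] big[of t] h0neg by force
  next
    case False
    then have "hf c t0 \<le> hf c (-t)" using t0(2)[of "-t"] big[of "-t"] h0neg by force
    then show ?thesis by (simp add: hf_even)
  qed
  have "t0 \<noteq> 0" using h0neg hf_0[of c] by auto
  then have pos: "t0 > 0" using t0(1) by simp
  have "t0 / c - tanh t0 = 0"
    using DERIV_local_min[OF hf_der[OF c0, of t0], of 1] glob by simp
  then have "qf c t0 = 0" by (simp add: qf_def)
  then show ?thesis using pos glob h0neg by blast
qed


lemma hf_strict:
  assumes c: "c > 1" and t0: "t0 > 0" "qf c t0 = 0" "\<forall>t. hf c t0 \<le> hf c t" "hf c t0 < 0"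
    and t: "t \<ge> 0" "hf c t = hf c t0"
  shows "t = t0"
proof -
  have c0: "c > 0" using c by simp
  have "t \<noteq> 0" using t t0 hf_0[of c] by auto
  then have tp: "t > 0" using t by simp
  have "t / c - tanh t = 0"
    using DERIV_local_min[OF hf_der[OF c0, of t], of 1] t0 t by simp
  then have "qf c t = 0" by (simp add: qf_def)
  then show ?thesis using qf_uniq[OF c tp t0(1)] t0 by simp
qed

lemma mstar_eq:
  assumes c: "\<beta> + 2 * \<alpha> > 1" and t0: "t0 > 0" "qf (\<beta> + 2 * \<alpha>) t0 = 0"
  shows "m_star \<alpha> \<beta> = t0 / (\<beta> + 2 * \<alpha>)"
  unfolding m_star_def
proof (rule Greatest_equality)
  let ?c = "\<beta> + 2 * \<alpha>"
  show "t0 / ?c = tanh (?c * (t0 / ?c))" using t0 c by (simp add: qf_def)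
  fix y assume y: "y = tanh (?c * y)"
  show "y \<le> t0 / ?c"
  proof (cases "y > 0")
    case True
    have "qf ?c (?c * y) = 0" using y c by (simp add: qf_def)
    moreover have "?c * y > 0" using True c by simp
    ultimately have "?c * y = t0" using qf_uniq[OF c _ t0(1) _ t0(2)] by blast
    then show ?thesis using c by (simp add: field_simps)
  next
    case False
    have "t0 / ?c > 0" using t0 c by simp
    then show ?thesis using False by linarith
  qed
qed

lemma hf_gap:
  assumes c: "c > 1" and t0: "t0 > 0" "qf c t0 = 0" "\<forall>t. hf c t0 \<le> hf c t" "hf c t0 < 0"
    and dl: "\<delta> > 0"
  shows "\<exists>\<eta>>0. \<forall>t. \<delta> \<le> \<bar>t - t0\<bar> \<and> \<delta> \<le> \<bar>t + t0\<bar> \<longrightarrow> hf c t0 + \<eta> \<le> hf c t"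
proof -
  have c0: "c > 0" using c by simp
  define M where "M = 2 * c + 1"
  have big: "hf c t > 0" if "t \<ge> M" for t
  proof -
    have "t / (2*c) > 1" using that c by (simp add: M_def field_simps)
    then have "t * (t / (2*c)) > t * 1" using that c by (intro mult_strict_left_mono) (auto simp: M_def)
    then have "t\<^sup>2 / (2*c) - \<bar>t\<bar> > 0" using that c by (simp add: M_def power2_eq_square)
    then show ?thesis using hf_lower[OF c0, of t] by linarith
  qed
  define K where "K = {0..M} \<inter> {t. \<delta> \<le> \<bar>t - t0\<bar>}"
  have cK: "compact K" unfolding K_def
    by (intro compact_Int_closed compact_Icc closed_Collect_le continuous_intros)
  have "\<exists>\<eta>>0. \<forall>u. u \<ge> 0 \<and> \<delta> \<le> \<bar>u - t0\<bar> \<longrightarrow> hf c t0 + \<eta> \<le> hf c u"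
  proof (cases "K = {}")
    case True
    show ?thesis
    proof (intro exI[of _ "- hf c t0"] conjI allI impI)
      show "0 < - hf c t0" using t0 by simp
      fix u assume u: "u \<ge> 0 \<and> \<delta> \<le> \<bar>u - t0\<bar>"
      then have "u \<notin> {0..M}" using True unfolding K_def by blast
      then have "u > M" using u by simp
      then show "hf c t0 + - hf c t0 \<le> hf c u" using big[of u] by simp
    qed
  next
    case False
    obtain t' where t': "t' \<in> K" "\<And>t. t \<in> K \<Longrightarrow> hf c t' \<le> hf c t"
      using continuous_attains_inf[OF cK False hf_cont[OF c0]] by blast
    have "t' \<noteq> t0" using t' dl unfolding K_def by auto
    moreover have "t' \<ge> 0" using t' unfolding K_def by auto
    ultimately have "hf c t' \<noteq> hf c t0" using hf_strict[OF c t0] by blast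
    moreover have "hf c t0 \<le> hf c t'" using t0(3) by blast
    ultimately have lt: "hf c t' > hf c t0" by linarith
    show ?thesis
    proof (intro exI[of _ "min (- hf c t0) (hf c t' - hf c t0)"] conjI allI impI)
      show "0 < min (- hf c t0) (hf c t' - hf c t0)" using t0 lt by simp
      fix u assume u: "u \<ge> 0 \<and> \<delta> \<le> \<bar>u - t0\<bar>"
      show "hf c t0 + min (- hf c t0) (hf c t' - hf c t0) \<le> hf c u"
      proof (cases "u \<le> M")
        case True
        then have "u \<in> K" using u unfolding K_def by auto
        then show ?thesis using t'(2)[of u] by linarith
      next
        case False
        then show ?thesis using big[of u] by linarith
      qed
    qed
  qed
  then obtain \<eta> where e: "\<eta> > 0" "\<And>u. u \<ge> 0 \<Longrightarrow> \<delta> \<le> \<bar>u - t0\<bar> \<Longrightarrow> hf c t0 + \<eta> \<le> hf c u"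
    by blast
  show ?thesis
  proof (intro exI[of _ \<eta>] conjI allI impI)
    show "\<eta> > 0" by fact
    fix t assume t: "\<delta> \<le> \<bar>t - t0\<bar> \<and> \<delta> \<le> \<bar>t + t0\<bar>"
    show "hf c t0 + \<eta> \<le> hf c t"
    proof (cases "t \<ge> 0")
      case True then show ?thesis using e(2)[of t] t by simp
    next
      case False
      have "\<bar>- t - t0\<bar> = \<bar>t + t0\<bar>" by linarith
      then have "hf c t0 + \<eta> \<le> hf c (-t)" using e(2)[of "-t"] t False by simp
      then show ?thesis by (simp add: hf_even)
    qed
  qed
qed



definition nx :: "nat \<Rightarrow> nat \<Rightarrow> nat" where "nx s k = (if Suc k = s then 0 else Suc k)"
definition pv :: "nat \<Rightarrow> nat \<Rightarrow> nat" where "pv s k = (if k = 0 then s - 1 else k - 1)"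

lemma nx_lt: "k < s \<Longrightarrow> nx s k < s" by (auto simp: nx_def)
lemma pv_lt: "k < s \<Longrightarrow> pv s k < s" by (auto simp: pv_def)
lemma pv_nx: "k < s \<Longrightarrow> pv s (nx s k) = k" by (auto simp: nx_def pv_def)
lemma nx_pv: "k < s \<Longrightarrow> nx s (pv s k) = k" by (auto simp: nx_def pv_def)
lemma Suc_mod_nx: "k < s \<Longrightarrow> Suc k mod s = nx s k"
  by (cases "Suc k = s") (auto simp: nx_def)

lemma sum_nx: "(\<Sum>k<s. f (nx s k)) = (\<Sum>k<s. f k)"
proof (cases s)
  case 0 then show ?thesis by simp
next
  case (Suc n)
  have "(\<Sum>k<n. f (nx s k)) = (\<Sum>k<n. f (Suc k))"
    by (intro sum.cong) (auto simp: nx_def Suc)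
  moreover have "(\<Sum>k<s. f (nx s k)) = (\<Sum>k<n. f (nx s k)) + f (nx s n)"
    unfolding Suc by (rule sum.lessThan_Suc)
  moreover have "(\<Sum>k<s. f k) = f 0 + (\<Sum>k<n. f (Suc k))"
    unfolding Suc by (rule sum.lessThan_Suc_shift)
  moreover have "nx s n = 0" by (simp add: nx_def Suc)
  ultimately show ?thesis by (simp add: add.commute)
qed

lemma xAe_formula:
  assumes "k < s"
  shows "xAe \<alpha> \<beta> s y k = \<beta> * y k + \<alpha> * y (nx s k) + \<alpha> * y (pv s k)"
proof -
  have "\<And>i. i < s \<Longrightarrow> y i * circA \<alpha> \<beta> s i k =
      \<beta> * (if i = k then y i else 0) + \<alpha> * (if i = nx s k then y i else 0)
      + \<alpha> * (if i = pv s k then y i else 0)"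
  proof -
    fix i assume i: "i < s"
    have a: "(i = Suc k mod s) = (i = nx s k)" using Suc_mod_nx[OF assms] by simp
    have b: "(k = Suc i mod s) = (i = pv s k)" using Suc_mod_nx[OF i] assms i
      by (auto simp: nx_def pv_def)
    show "y i * circA \<alpha> \<beta> s i k =
      \<beta> * (if i = k then y i else 0) + \<alpha> * (if i = nx s k then y i else 0)
      + \<alpha> * (if i = pv s k then y i else 0)"
      unfolding circA_def shiftP_def using a b by (simp add: algebra_simps)
  qed
  then have "xAe \<alpha> \<beta> s y k = (\<Sum>i<s. \<beta> * (if i = k then y i else 0) + \<alpha> * (if i = nx s k then y i else 0)
      + \<alpha> * (if i = pv s k then y i else 0))"
    unfolding xAe_def by (intro sum.cong) auto
  also have "\<dots> = \<beta> * y k + \<alpha> * y (nx s k) + \<alpha> * y (pv s k)"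
    using assms nx_lt[OF assms] pv_lt[OF assms]
    by (simp add: sum.distrib sum_distrib_left[symmetric] sum.delta)
  finally show ?thesis .
qed

lemma quadA_eq: "quadA \<alpha> \<beta> s y = (\<Sum>k<s. xAe \<alpha> \<beta> s y k * y k)"
  unfolding quadA_def xAe_def
  by (subst sum.swap) (simp add: sum_distrib_right)


lemma sq_diff_le: "(a - b)\<^sup>2 \<le> 2 * a\<^sup>2 + 2 * (b::real)\<^sup>2"
proof -
  have "0 \<le> (a + b)\<^sup>2" by simp
  then show ?thesis by (simp add: power2_eq_square algebra_simps)
qed

lemma phi_lower:
  assumes a: "\<alpha> > 0" and b: "\<beta> > 2 * \<alpha>"
  shows "phiN \<alpha> \<beta> s y \<ge> (\<Sum>k<s. hf (\<beta> + 2 * \<alpha>) (xAe \<alpha> \<beta> s y k))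
          + \<alpha> * (\<beta> - 2 * \<alpha>) / (2 * (\<beta> + 2 * \<alpha>)) * (\<Sum>k<s. (y k - y (nx s k))\<^sup>2)"
proof -
  define c where "c = \<beta> + 2 * \<alpha>"
  have c0: "c > 0" using a b by (simp add: c_def)
  define z where "z k = xAe \<alpha> \<beta> s y k" for k
  define d where "d k = y k - y (nx s k)" for k
  define e where "e k = d k - d (pv s k)" for k
  define D where "D = (\<Sum>k<s. (d k)\<^sup>2)"
  have ze: "z k = c * y k - \<alpha> * e k" if "k < s" for k
    using that unfolding z_def e_def d_def c_def
    by (simp add: xAe_formula nx_pv algebra_simps)
  have s1: "(\<Sum>k<s. y k * d (pv s k)) = (\<Sum>k<s. y (nx s k) * d k)"
  proof -
    have "(\<Sum>k<s. y k * d (pv s k)) = (\<Sum>k<s. y (nx s k) * d (pv s (nx s k)))"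
      using sum_nx[of "\<lambda>k. y k * d (pv s k)" s] by simp
    also have "\<dots> = (\<Sum>k<s. y (nx s k) * d k)"
      by (intro sum.cong) (auto simp: pv_nx)
    finally show ?thesis .
  qed
  have ye: "(\<Sum>k<s. y k * e k) = D"
  proof -
    have "(\<Sum>k<s. y k * e k) = (\<Sum>k<s. y k * d k) - (\<Sum>k<s. y k * d (pv s k))"
      by (simp add: e_def algebra_simps sum_subtractf)
    also have "\<dots> = (\<Sum>k<s. y k * d k - y (nx s k) * d k)"
      by (simp add: s1 sum_subtractf)
    also have "\<dots> = D" unfolding D_def
      by (intro sum.cong) (auto simp: d_def power2_eq_square algebra_simps)
    finally show ?thesis .
  qed
  have ee: "(\<Sum>k<s. (e k)\<^sup>2) \<le> 4 * D"
  proof -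
    have "(\<Sum>k<s. (e k)\<^sup>2) \<le> (\<Sum>k<s. 2 * (d k)\<^sup>2 + 2 * (d (pv s k))\<^sup>2)"
      unfolding e_def by (intro sum_mono sq_diff_le)
    also have "(\<Sum>k<s. (d (pv s k))\<^sup>2) = D"
    proof -
      have "(\<Sum>k<s. (d (pv s k))\<^sup>2) = (\<Sum>k<s. (d (pv s (nx s k)))\<^sup>2)"
        using sum_nx[of "\<lambda>k. (d (pv s k))\<^sup>2" s] by simp
      also have "\<dots> = D" unfolding D_def by (intro sum.cong) (auto simp: pv_nx)
      finally show ?thesis .
    qed
    then have "(\<Sum>k<s. 2 * (d k)\<^sup>2 + 2 * (d (pv s k))\<^sup>2) = 4 * D"
      by (simp add: sum.distrib sum_distrib_left[symmetric] D_def)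
    finally show ?thesis .
  qed
  have Q: "quadA \<alpha> \<beta> s y = (\<Sum>k<s. z k * y k)" by (simp add: quadA_eq z_def)
  have key: "c * quadA \<alpha> \<beta> s y - (\<Sum>k<s. (z k)\<^sup>2) = \<alpha> * c * D - \<alpha>\<^sup>2 * (\<Sum>k<s. (e k)\<^sup>2)"
  proof -
    have "c * quadA \<alpha> \<beta> s y - (\<Sum>k<s. (z k)\<^sup>2) = (\<Sum>k<s. \<alpha> * c * (y k * e k) - \<alpha>\<^sup>2 * (e k)\<^sup>2)"
      unfolding Q sum_distrib_left sum_subtractf[symmetric]
      by (intro sum.cong) (auto simp: ze power2_eq_square algebra_simps)
    also have "\<dots> = \<alpha> * c * D - \<alpha>\<^sup>2 * (\<Sum>k<s. (e k)\<^sup>2)"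
      by (simp add: sum_subtractf sum_distrib_left[symmetric] ye)
    finally show ?thesis .
  qed
  have "\<alpha>\<^sup>2 * (\<Sum>k<s. (e k)\<^sup>2) \<le> \<alpha>\<^sup>2 * (4 * D)"
    using ee by (intro mult_left_mono) auto
  then have key2: "c * quadA \<alpha> \<beta> s y - (\<Sum>k<s. (z k)\<^sup>2) \<ge> \<alpha> * (\<beta> - 2 * \<alpha>) * D"
    using key unfolding c_def by (simp add: power2_eq_square algebra_simps)
  have H: "(\<Sum>k<s. hf c (z k)) = (\<Sum>k<s. (z k)\<^sup>2) / (2 * c) - (\<Sum>k<s. ln (cosh (z k)))"
    by (simp add: hf_def sum_subtractf sum_divide_distrib)
  have P: "phiN \<alpha> \<beta> s y = quadA \<alpha> \<beta> s y / 2 - (\<Sum>k<s. ln (cosh (z k)))"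
    by (simp add: phiN_def z_def)
  have "phiN \<alpha> \<beta> s y - (\<Sum>k<s. hf c (z k)) = (c * quadA \<alpha> \<beta> s y - (\<Sum>k<s. (z k)\<^sup>2)) / (2 * c)"
    unfolding P H using c0 by (simp add: field_simps)
  also have "\<dots> \<ge> \<alpha> * (\<beta> - 2 * \<alpha>) * D / (2 * c)"
    using key2 c0 by (intro divide_right_mono) auto
  finally show ?thesis unfolding c_def z_def D_def d_def by simp
qed

lemma phi_const:
  assumes "s > 0" "\<beta> + 2 * \<alpha> > 0"
  shows "phiN \<alpha> \<beta> s (\<lambda>k. m) = real s * hf (\<beta> + 2 * \<alpha>) ((\<beta> + 2 * \<alpha>) * m)"
proof -
  have z: "xAe \<alpha> \<beta> s (\<lambda>k. m) k = (\<beta> + 2 * \<alpha>) * m" if "k < s" for k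
    using that by (simp add: xAe_formula algebra_simps)
  have "quadA \<alpha> \<beta> s (\<lambda>k. m) = real s * ((\<beta> + 2 * \<alpha>) * m * m)"
    by (simp add: quadA_eq z)
  then show ?thesis unfolding phiN_def hf_def using assms
    by (simp add: z power2_eq_square field_simps)
qed


lemma cluster_lemma:
  fixes a b m r :: real
  assumes "\<bar>a - m\<bar> < r / 2 \<or> \<bar>a + m\<bar> < r / 2" "\<bar>b - m\<bar> < r / 2 \<or> \<bar>b + m\<bar> < r / 2"
    "\<bar>a - b\<bar> < r" "r < m" "0 < r"
  shows "(\<bar>b - m\<bar> < r / 2) = (\<bar>a - m\<bar> < r / 2)"
  using assms unfolding abs_less_iff by linarith

lemma core:
  assumes a: "\<alpha> > 0" and b: "\<beta> > 2 * \<alpha>" and c1: "\<beta> + 2 * \<alpha> > 1"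
    and r: "0 < r" "r < m_star \<alpha> \<beta>"
  shows "\<exists>\<rho>>0. \<forall>s y. s > 0 \<longrightarrow>
     (\<exists>k<s. \<not> (m_star \<alpha> \<beta> - r \<le> y k \<and> y k \<le> m_star \<alpha> \<beta> + r)) \<longrightarrow>
     (\<exists>k<s. \<not> (- m_star \<alpha> \<beta> - r \<le> y k \<and> y k \<le> - m_star \<alpha> \<beta> + r)) \<longrightarrow>
     phiN \<alpha> \<beta> s y \<ge> phiN \<alpha> \<beta> s (\<lambda>k. m_star \<alpha> \<beta>) + \<rho>"
proof -
  define c where "c = \<beta> + 2 * \<alpha>"
  have c1': "c > 1" using c1 by (simp add: c_def)
  have c0: "c > 0" using c1' by simp
  obtain t0 where t0: "t0 > 0" "qf c t0 = 0" "\<forall>t. hf c t0 \<le> hf c t" "hf c t0 < 0"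
    using hf_exists[OF c1'] by blast
  define m where "m = m_star \<alpha> \<beta>"
  have mt: "m = t0 / c" unfolding m_def c_def using mstar_eq[OF c1] t0 by (simp add: c_def)
  have t0m: "t0 = c * m" using mt c0 by simp
  define \<delta> where "\<delta> = c * r / 4"
  have dpos: "\<delta> > 0" using c0 r by (simp add: \<delta>_def)
  obtain \<eta> where eta: "\<eta> > 0" "\<And>t. \<delta> \<le> \<bar>t - t0\<bar> \<Longrightarrow> \<delta> \<le> \<bar>t + t0\<bar> \<Longrightarrow> hf c t0 + \<eta> \<le> hf c t"
    using hf_gap[OF c1' t0 dpos] by blast
  define \<epsilon> where "\<epsilon> = min r (c * r / (8 * \<alpha>))"
  have epos: "\<epsilon> > 0" using r c0 a by (simp add: \<epsilon>_def)
  have er: "\<epsilon> \<le> r" by (simp add: \<epsilon>_def)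
  have ea: "2 * \<alpha> * \<epsilon> \<le> c * r / 4"
  proof -
    have "2 * \<alpha> * \<epsilon> \<le> 2 * \<alpha> * (c * r / (8 * \<alpha>))"
      using a by (intro mult_left_mono) (auto simp: \<epsilon>_def)
    also have "\<dots> = c * r / 4" using a by (simp add: field_simps)
    finally show ?thesis .
  qed
  define \<gamma> where "\<gamma> = \<alpha> * (\<beta> - 2 * \<alpha>) / (2 * c)"
  have gpos: "\<gamma> > 0" using a b c0 by (simp add: \<gamma>_def)
  define \<rho> where "\<rho> = min (\<gamma> * \<epsilon>\<^sup>2) \<eta>"
  have rpos: "\<rho> > 0" using gpos epos eta by (simp add: \<rho>_def)
  show ?thesis
  proof (intro exI[of _ \<rho>] conjI allI impI)
    show "\<rho> > 0" by fact
    fix s :: nat and y :: "nat \<Rightarrow> real"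
    assume s: "s > 0"
      and h1: "\<exists>k<s. \<not> (m_star \<alpha> \<beta> - r \<le> y k \<and> y k \<le> m_star \<alpha> \<beta> + r)"
      and h2: "\<exists>k<s. \<not> (- m_star \<alpha> \<beta> - r \<le> y k \<and> y k \<le> - m_star \<alpha> \<beta> + r)"
    define z where "z k = xAe \<alpha> \<beta> s y k" for k
    define d where "d k = y k - y (nx s k)" for k
    define D where "D = (\<Sum>k<s. (d k)\<^sup>2)"
    have low: "phiN \<alpha> \<beta> s y \<ge> (\<Sum>k<s. hf c (z k)) + \<gamma> * D"
      using phi_lower[OF a b, of s y] by (simp add: c_def z_def D_def d_def \<gamma>_def)
    have pc: "phiN \<alpha> \<beta> s (\<lambda>k. m_star \<alpha> \<beta>) = (\<Sum>k<s. hf c t0)"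
      using phi_const[OF s, of \<beta> \<alpha> "m_star \<alpha> \<beta>"] c0 t0m by (simp add: c_def m_def)
    have diff: "phiN \<alpha> \<beta> s y - phiN \<alpha> \<beta> s (\<lambda>k. m_star \<alpha> \<beta>) \<ge> (\<Sum>k<s. hf c (z k) - hf c t0) + \<gamma> * D"
      using low pc by (simp add: sum_subtractf)
    have nn: "\<And>k. hf c (z k) - hf c t0 \<ge> 0" using t0 by simp
    have Dnn: "D \<ge> 0" by (simp add: D_def sum_nonneg)
    show "phiN \<alpha> \<beta> s y \<ge> phiN \<alpha> \<beta> s (\<lambda>k. m_star \<alpha> \<beta>) + \<rho>"
    proof (cases "\<exists>k<s. \<epsilon> \<le> \<bar>d k\<bar>")
      case True
      then obtain k where k: "k < s" "\<epsilon> \<le> \<bar>d k\<bar>" by blast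
      have "\<epsilon>\<^sup>2 \<le> (d k)\<^sup>2" using k epos by (metis abs_le_square_iff abs_of_pos)
      also have "(d k)\<^sup>2 \<le> D" unfolding D_def using k
        by (intro member_le_sum) auto
      finally have "\<gamma> * \<epsilon>\<^sup>2 \<le> \<gamma> * D" using gpos by simp
      moreover have "(\<Sum>k<s. hf c (z k) - hf c t0) \<ge> 0" using nn by (simp add: sum_nonneg)
      ultimately show ?thesis using diff unfolding \<rho>_def by linarith
    next
      case False
      note smalld = False
      show ?thesis
      proof (cases "\<exists>k<s. \<delta> \<le> \<bar>z k - t0\<bar> \<and> \<delta> \<le> \<bar>z k + t0\<bar>")
        case True
        then obtain k where k: "k < s" "\<delta> \<le> \<bar>z k - t0\<bar>" "\<delta> \<le> \<bar>z k + t0\<bar>" by blast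
        have "\<eta> \<le> hf c (z k) - hf c t0" using eta(2)[OF k(2,3)] by simp
        also have "\<dots> \<le> (\<Sum>k<s. hf c (z k) - hf c t0)" using k nn
          by (intro member_le_sum) auto
        finally have "\<eta> \<le> (\<Sum>k<s. hf c (z k) - hf c t0)" .
        moreover have "\<gamma> * D \<ge> 0" using gpos Dnn by simp
        ultimately show ?thesis using diff unfolding \<rho>_def by linarith
      next
        case False
        have near: "\<bar>y k - m\<bar> < r / 2 \<or> \<bar>y k + m\<bar> < r / 2" if k: "k < s" for k
        proof -
          have ze: "z k = c * y k - \<alpha> * (d k - d (pv s k))"
            using k unfolding z_def d_def c_def
            by (simp add: xAe_formula nx_pv algebra_simps)
          have "\<bar>d k\<bar> < \<epsilon>" "\<bar>d (pv s k)\<bar> < \<epsilon>" using smalld k pv_lt[OF k] by auto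
          then have "\<bar>d k - d (pv s k)\<bar> < 2 * \<epsilon>" by linarith
          then have "\<alpha> * \<bar>d k - d (pv s k)\<bar> \<le> \<alpha> * (2 * \<epsilon>)" using a by (intro mult_left_mono) auto
          moreover have "\<bar>z k - c * y k\<bar> = \<alpha> * \<bar>d k - d (pv s k)\<bar>" using ze a by (simp add: abs_mult)
          ultimately have zc: "\<bar>z k - c * y k\<bar> \<le> c * r / 4" using ea by linarith
          have "\<bar>z k - t0\<bar> < \<delta> \<or> \<bar>z k + t0\<bar> < \<delta>" using False k by force
          then have "\<bar>c * y k - c * m\<bar> < c * r / 2 \<or> \<bar>c * y k + c * m\<bar> < c * r / 2"
            using zc t0m unfolding \<delta>_def by linarith
          moreover have "\<bar>c * y k - c * m\<bar> = c * \<bar>y k - m\<bar>" using c0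
            by (metis abs_mult abs_of_pos right_diff_distrib)
          moreover have "\<bar>c * y k + c * m\<bar> = c * \<bar>y k + m\<bar>" using c0
            by (metis abs_mult abs_of_pos distrib_left)
          ultimately have "c * \<bar>y k - m\<bar> < c * (r / 2) \<or> c * \<bar>y k + m\<bar> < c * (r / 2)"
            by simp
          then show ?thesis using c0 by (meson mult_less_cancel_left_pos)
        qed
        have mr: "r < m" using r by (simp add: m_def)
        have same: "\<bar>y k - m\<bar> < r / 2 \<longleftrightarrow> \<bar>y 0 - m\<bar> < r / 2" if "k < s" for k
          using that
        proof (induction k)
          case 0 then show ?case by simp
        next
          case (Suc k)
          have ks: "k < s" using Suc by simp
          have "nx s k = Suc k" using Suc by (simp add: nx_def)
          then have "\<bar>y k - y (Suc k)\<bar> < \<epsilon>" using smalld ks by (auto simp: d_def)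
          then have dk: "\<bar>y k - y (Suc k)\<bar> < r" using er by simp
          have "\<bar>y (Suc k) - m\<bar> < r / 2 \<longleftrightarrow> \<bar>y k - m\<bar> < r / 2"
            using cluster_lemma[OF near[OF ks] near[OF Suc.prems] dk mr r(1)] .
          then show ?case using Suc ks by simp
        qed
        show ?thesis
        proof (cases "\<bar>y 0 - m\<bar> < r / 2")
          case True
          then have "\<forall>k<s. \<bar>y k - m\<bar> < r / 2" using same by blast
          then have "\<forall>k<s. m - r \<le> y k \<and> y k \<le> m + r" using r unfolding abs_less_iff by force
          then show ?thesis using h1 by (auto simp: m_def)
        next
          case False
          then have "\<forall>k<s. \<bar>y k + m\<bar> < r / 2" using same near by blast
          then have "\<forall>k<s. - m - r \<le> y k \<and> y k \<le> - m + r" using r unfolding abs_less_iff by force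
          then show ?thesis using h2 by (auto simp: m_def)
        qed
      qed
    qed
  qed
qed


theorem lemma7p10:
  fixes \<alpha> \<beta> R r :: real and s :: "nat \<Rightarrow> nat"
  assumes "\<beta> > 2 * \<alpha>" and "\<alpha> > 0" and "\<beta> + 2 * \<alpha> > 1"
    and "\<And>N. s N > 0"
    and "(\<lambda>N. real (s N)) \<in> o(\<lambda>N. sqrt (real N) / ln (real N))"
    and "\<And>N. R > 2 * lam_max \<alpha> \<beta> (s N) / lam_min \<alpha> \<beta> (s N)"
    and "0 < r" and "r < m_star \<alpha> \<beta>"
  shows "\<exists>\<rho>>0. \<forall>\<^sub>F N in at_top.
           \<forall>x\<in>DeltaN \<alpha> \<beta> R N (s N) r.
             phiN \<alpha> \<beta> (s N) (\<lambda>k. sqrt (real (s N) / real N) * x k)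
               \<ge> phiN \<alpha> \<beta> (s N) (\<lambda>k. m_star \<alpha> \<beta>) + \<rho>"
proof -
  obtain \<rho> where rho: "\<rho> > 0" and
    H: "\<And>s y. s > 0 \<Longrightarrow>
     (\<exists>k<s. \<not> (m_star \<alpha> \<beta> - r \<le> y k \<and> y k \<le> m_star \<alpha> \<beta> + r)) \<Longrightarrow>
     (\<exists>k<s. \<not> (- m_star \<alpha> \<beta> - r \<le> y k \<and> y k \<le> - m_star \<alpha> \<beta> + r)) \<Longrightarrow>
     phiN \<alpha> \<beta> s y \<ge> phiN \<alpha> \<beta> s (\<lambda>k. m_star \<alpha> \<beta>) + \<rho>"
    using core[OF assms(2,1,3,7,8)] by blast
  show ?thesis
  proof (intro exI[of _ \<rho>] conjI)
    show "\<rho> > 0" by fact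
    show "\<forall>\<^sub>F N in at_top. \<forall>x\<in>DeltaN \<alpha> \<beta> R N (s N) r.
             phiN \<alpha> \<beta> (s N) (\<lambda>k. sqrt (real (s N) / real N) * x k)
               \<ge> phiN \<alpha> \<beta> (s N) (\<lambda>k. m_star \<alpha> \<beta>) + \<rho>"
    proof (rule eventually_mono[OF eventually_ge_at_top[of 1]], intro ballI)
      fix N :: nat and x assume N: "1 \<le> N" and x: "x \<in> DeltaN \<alpha> \<beta> R N (s N) r"
      define m where "m = m_star \<alpha> \<beta>"
      define q where "q = sqrt (real (s N) / real N)"
      define cc where "cc = sqrt (real N / real (s N))"
      have sp: "s N > 0" by fact
      have ccq: "cc * q = 1" unfolding cc_def q_def using N sp
        by (simp add: real_sqrt_mult[symmetric])
      have ccp: "cc > 0" unfolding cc_def using N sp by simp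
      define y where "y k = q * x k" for k
      have xy: "x k = cc * y k" for k unfolding y_def using ccq
        by (metis mult.assoc mult_1)
      have iff: "(cc * a \<le> x k) = (a \<le> y k)" "(x k \<le> cc * a) = (y k \<le> a)" for a k
        using ccp xy by simp_all
      have x1: "\<not> (\<forall>k<s N. cc * (m - r) \<le> x k \<and> x k \<le> cc * (m + r))"
        and x2: "\<not> (\<forall>k<s N. cc * (- m - r) \<le> x k \<and> x k \<le> cc * (- m + r))"
        using x unfolding DeltaN_def Let_def m_def cc_def by auto
      have h1: "\<exists>k<s N. \<not> (m - r \<le> y k \<and> y k \<le> m + r)" using x1 iff by auto
      have h2: "\<exists>k<s N. \<not> (- m - r \<le> y k \<and> y k \<le> - m + r)" using x2 iff by auto
      show "phiN \<alpha> \<beta> (s N) (\<lambda>k. sqrt (real (s N) / real N) * x k)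
               \<ge> phiN \<alpha> \<beta> (s N) (\<lambda>k. m_star \<alpha> \<beta>) + \<rho>"
        using H[OF sp, of y] h1 h2 unfolding y_def q_def m_def by blast
    qed
  qed
qed

end
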